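(* Let $t \geq 1$ and $k \geq 1$ be integers, and let $\mathcal{F}$ be a finite family of finite sets with $\alpha(\mathcal{F}) \geq t$. Let $\mathcal{A}_1, \dots, \mathcal{A}_k$ be cross-$t$-intersecting sub-families of $\mathcal{F}$. If $k \geq \kappa(\mathcal{F},t)$, then \[\sum_{i=1}^k |\mathcal{A}_i| \leq k\, l(\mathcal{F},t) \quad \text{and} \quad \prod_{i=1}^k |\mathcal{A}_i| \leq \left(l(\mathcal{F},t)\right)^k,\] and both bounds are attained if $\mathcal{A}_1 = \dots = \mathcal{A}_k = \mathcal{L}$ for some largest $t$-intersecting sub-family $\mathcal{L}$ of $\mathcal{F}$. Moreover, if $k > \kappa(\mathcal{F},t)$, then in both inequalities equality holds only if $\mathcal{A}_1 = \dots = \mathcal{A}_k = \mathcal{L}$ for some largest $t$-intersecting sub-family $\mathcal{L}$ of $\mathcal{F}$.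
   Context: All sets and families are finite. A set $A$ $t$-intersects a set $B$ if $|A \cap B| \geq t$. A family $\mathcal{A}$ is $t$-intersecting if $|A \cap B| \geq t$ for all $A, B \in \mathcal{A}$ with $A \neq B$. Families $\mathcal{A}_1, \dots, \mathcal{A}_k$ (not necessarily distinct or non-empty) are cross-$t$-intersecting if for all $i \neq j$ in $\{1,\dots,k\}$, $|A \cap B| \geq t$ for every $A \in \mathcal{A}_i$ and $B \in \mathcal{A}_j$. For a non-empty family $\mathcal{F}$: $\alpha(\mathcal{F}) = \max\{|F| : F \in \mathcal{F}\}$; $l(\mathcal{F},t)$ is the size of a largest $t$-intersecting sub-family of $\mathcal{F}$. For a family $\mathcal{A}$, $\mathcal{A}^{t,+} = \{A \in \mathcal{A} : |A \cap B| \geq t \text{ for all } B \in \mathcal{A} \text{ with } B \neq A\}$ and $\mathcal{A}^{t,-} = \mathcal{A} \setminus \mathcal{A}^{t,+}$. For $\mathcal{A} \subseteq \mathcal{F}$, $\beta(\mathcal{F},t,\mathcal{A}) = \frac{l(\mathcal{F},t) - |\mathcal{A}^{t,+}|}{|\mathcal{A}^{t,-}|}$ if $\mathcal{A}^{t,-} \neq \emptyset$, and $\beta(\mathcal{F},t,\mathcal{A}) = \frac{l(\mathcal{F},t)}{|\mathcal{F}|}$ if $\mathcal{A}^{t,-} = \emptyset$. Then $\beta(\mathcal{F},t) = \min\{\beta(\mathcal{F},t,\mathcal{A}) : \mathcal{A} \subseteq \mathcal{F}\}$ (which is positive) and $\kappa(\mathcal{F},t) = 1/\beta(\mathcal{F},t)$.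 *)

theory Defs
  imports Main "HOL.Real"
begin

definition t_intersecting :: "nat \<Rightarrow> 'a set set \<Rightarrow> bool" where
  "t_intersecting t \<A> \<longleftrightarrow> (\<forall>A\<in>\<A>. \<forall>B\<in>\<A>. A \<noteq> B \<longrightarrow> card (A \<inter> B) \<ge> t)"

definition cross_t_intersecting :: "nat \<Rightarrow> nat \<Rightarrow> (nat \<Rightarrow> 'a set set) \<Rightarrow> bool" where
  "cross_t_intersecting t k \<A> \<longleftrightarrow>
     (\<forall>i\<in>{1..k}. \<forall>j\<in>{1..k}. i \<noteq> j \<longrightarrow>
        (\<forall>A\<in>\<A> i. \<forall>B\<in>\<A> j. card (A \<inter> B) \<ge> t))"

definition alpha :: "'a set set \<Rightarrow> nat" where
  "alpha \<F> = Max (card ` \<F>)"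

definition lmax :: "'a set set \<Rightarrow> nat \<Rightarrow> nat" where
  "lmax \<F> t = Max {card \<G> | \<G>. \<G> \<subseteq> \<F> \<and> t_intersecting t \<G>}"

definition largest_t_intersecting :: "'a set set \<Rightarrow> nat \<Rightarrow> 'a set set \<Rightarrow> bool" where
  "largest_t_intersecting \<F> t \<L> \<longleftrightarrow>
     \<L> \<subseteq> \<F> \<and> t_intersecting t \<L> \<and> card \<L> = lmax \<F> t"

definition tplus :: "nat \<Rightarrow> 'a set set \<Rightarrow> 'a set set" where
  "tplus t \<A> = {A \<in> \<A>. \<forall>B\<in>\<A>. B \<noteq> A \<longrightarrow> card (A \<inter> B) \<ge> t}"

definition tminus :: "nat \<Rightarrow> 'a set set \<Rightarrow> 'a set set" where
  "tminus t \<A> = \<A> - tplus t \<A>"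

definition betaA :: "'a set set \<Rightarrow> nat \<Rightarrow> 'a set set \<Rightarrow> real" where
  "betaA \<F> t \<A> =
     (if tminus t \<A> \<noteq> {}
      then (real (lmax \<F> t) - real (card (tplus t \<A>))) / real (card (tminus t \<A>))
      else real (lmax \<F> t) / real (card \<F>))"

definition beta :: "'a set set \<Rightarrow> nat \<Rightarrow> real" where
  "beta \<F> t = Min ((\<lambda>\<A>. betaA \<F> t \<A>) ` Pow \<F>)"

definition kappa :: "'a set set \<Rightarrow> nat \<Rightarrow> real" where
  "kappa \<F> t = 1 / beta \<F> t"

end

theory Submission imports Defs "HOL-Analysis.Convex" begin

lemma powr_root_pow:
  fixes x :: real assumes "x > 0" "k \<ge> (1::nat)"
  shows "(x powr (1/k)) ^ k = x"
proof -
  have "(x powr (1/k)) ^ k = (x powr (1/k)) powr (real k)"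
    using assms by (simp add: powr_realpow)
  also have "\<dots> = x powr (1/k * k)" by (simp add: powr_powr)
  also have "\<dots> = x" using assms by simp
  finally show ?thesis .
qed

lemma amgm_nat:
  fixes a :: "nat \<Rightarrow> nat" and k :: nat
  assumes "k \<ge> 1"
  shows "real (\<Prod>i=1..k. a i) \<le> (real (\<Sum>i=1..k. a i) / k) ^ k"
proof -
  let ?P = "real (\<Prod>i=1..k. a i)"
  have ne: "{1..k} \<noteq> {}" using assms by auto
  have am: "(\<Sum>i\<in>{1..k}. real (a i) / card {1..k}) \<ge> (\<Prod>i\<in>{1..k}. real (a i)) powr (1 / card {1..k})"
    by (rule arith_geom_mean) (use ne in auto)
  have m: "real (\<Sum>i=1..k. a i) / k \<ge> ?P powr (1/k)"
    using am by (simp add: sum_divide_distrib)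
  show ?thesis
  proof (cases "?P = 0")
    case True
    have "0 \<le> (real (\<Sum>i=1..k. a i) / k) ^ k" by (simp add: sum_nonneg)
    thus ?thesis using True by linarith
  next
    case False
    have "?P \<ge> 0" by (simp del: of_nat_prod)
    hence pos: "?P > 0" using False by linarith
    have "?P = (?P powr (1/k)) ^ k"
      using powr_root_pow[OF pos assms] by simp
    also have "\<dots> \<le> (real (\<Sum>i=1..k. a i) / k) ^ k"
      by (rule power_mono[OF m]) simp
    finally show ?thesis .
  qed
qed

lemma tplus_int: "t_intersecting t (tplus t A)"
  unfolding t_intersecting_def tplus_def by auto

context
  fixes F :: "'a set set" and t :: nat
  assumes finF: "finite F" and neF: "F \<noteq> {}"
begin

lemma lset_fin: "finite {card G | G. G \<subseteq> F \<and> t_intersecting t G}"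
proof -
  have "{card G | G. G \<subseteq> F \<and> t_intersecting t G} \<subseteq> card ` Pow F" by auto
  moreover have "finite (card ` Pow F)" using finF by simp
  ultimately show ?thesis by (rule finite_subset)
qed

lemma lset_ne: "{card G | G. G \<subseteq> F \<and> t_intersecting t G} \<noteq> {}"
  unfolding t_intersecting_def by blast

lemma le_lmax: "G \<subseteq> F \<Longrightarrow> t_intersecting t G \<Longrightarrow> card G \<le> lmax F t"
  unfolding lmax_def by (rule Max_ge[OF lset_fin]) blast

lemma ex_largest: "\<exists>L. largest_t_intersecting F t L"
proof -
  have "lmax F t \<in> {card G | G. G \<subseteq> F \<and> t_intersecting t G}"
    unfolding lmax_def by (rule Max_in[OF lset_fin lset_ne])
  thus ?thesis unfolding largest_t_intersecting_def by auto
qed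

lemma lmax_pos: "lmax F t \<ge> 1"
proof -
  obtain F0 where "F0 \<in> F" using neF by blast
  hence "{F0} \<subseteq> F" by simp
  moreover have "t_intersecting t {F0}" by (simp add: t_intersecting_def)
  ultimately have "card {F0} \<le> lmax F t" by (rule le_lmax)
  thus ?thesis by simp
qed


lemma tplus_le: "A \<subseteq> F \<Longrightarrow> card (tplus t A) \<le> lmax F t"
proof -
  assume "A \<subseteq> F"
  hence "tplus t A \<subseteq> F" by (auto simp: tplus_def)
  thus ?thesis using tplus_int by (rule le_lmax)
qed

lemma tplus_less: assumes "A \<subseteq> F" "tminus t A \<noteq> {}"
  shows "card (tplus t A) < lmax F t"
proof -
  obtain F0 where F0: "F0 \<in> tminus t A" using assms(2) by (meson ex_in_conv)
  have sub: "tplus t A \<subseteq> A" unfolding tplus_def by (rule Collect_subset)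
  have "finite A" using assms(1) finF by (rule finite_subset)
  hence fin: "finite (tplus t A)" using sub by (rule finite_subset[rotated])
  have nin: "F0 \<notin> tplus t A" using F0 by (simp add: tminus_def)
  have F0A: "F0 \<in> A" using F0 by (simp add: tminus_def)
  have "t_intersecting t (insert F0 (tplus t A))"
    unfolding t_intersecting_def
  proof (intro ballI impI)
    fix X Y assume X: "X \<in> insert F0 (tplus t A)" and Y: "Y \<in> insert F0 (tplus t A)" and ne: "X \<noteq> Y"
    show "t \<le> card (X \<inter> Y)"
    proof (cases "X \<in> tplus t A")
      case True
      have "Y \<in> A" using Y F0A sub by blast
      moreover have "\<forall>B\<in>A. B \<noteq> X \<longrightarrow> t \<le> card (X \<inter> B)" using True unfolding tplus_def by blast
      ultimately show ?thesis using ne by metis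
    next
      case False
      hence "X = F0" using X by blast
      hence "Y \<in> tplus t A" using Y ne by blast
      hence "\<forall>B\<in>A. B \<noteq> Y \<longrightarrow> t \<le> card (Y \<inter> B)" unfolding tplus_def by blast
      hence "t \<le> card (Y \<inter> X)" using F0A ne \<open>X = F0\<close> by metis
      thus ?thesis by (simp add: Int_commute)
    qed
  qed
  moreover have "insert F0 (tplus t A) \<subseteq> F" using F0A sub assms(1) by blast
  ultimately have "card (insert F0 (tplus t A)) \<le> lmax F t" by (rule le_lmax[rotated])
  thus ?thesis using fin nin by simp
qed

lemma betaA_pos: assumes "A \<subseteq> F" shows "betaA F t A > 0"
proof (cases "tminus t A = {}")
  case True
  have "card F > 0" using finF neF by (simp add: card_gt_0_iff)
  thus ?thesis using True lmax_pos by (simp add: betaA_def)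
next
  case False
  have fin: "finite (tminus t A)" unfolding tminus_def
    by (rule finite_subset[OF Diff_subset finite_subset[OF assms(1) finF]])
  hence "card (tminus t A) > 0" using False by (simp add: card_gt_0_iff)
  moreover have "real (card (tplus t A)) < real (lmax F t)" using tplus_less[OF assms False] by simp
  ultimately show ?thesis using False by (simp add: betaA_def)
qed

lemma beta_pos: "beta F t > 0"
proof -
  have "beta F t \<in> (\<lambda>A. betaA F t A) ` Pow F"
    unfolding beta_def by (rule Min_in) (use finF in auto)
  thus ?thesis using betaA_pos by auto
qed

lemma beta_le: "A \<subseteq> F \<Longrightarrow> beta F t \<le> betaA F t A"
  unfolding beta_def by (rule Min_le) (use finF in auto)

lemma tminus_bound: assumes "A \<subseteq> F" "tminus t A \<noteq> {}"
  shows "real (card (tminus t A)) \<le> kappa F t * (real (lmax F t) - real (card (tplus t A)))"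
proof -
  have fin: "finite (tminus t A)" unfolding tminus_def
    by (rule finite_subset[OF Diff_subset finite_subset[OF assms(1) finF]])
  hence cpos: "real (card (tminus t A)) > 0" using assms(2) by (simp add: card_gt_0_iff)
  have "beta F t \<le> (real (lmax F t) - real (card (tplus t A))) / real (card (tminus t A))"
    using beta_le[OF assms(1)] assms(2) by (simp add: betaA_def)
  hence "beta F t * real (card (tminus t A)) \<le> real (lmax F t) - real (card (tplus t A))"
    using cpos by (simp add: pos_le_divide_eq)
  hence "real (card (tminus t A)) \<le> (real (lmax F t) - real (card (tplus t A))) / beta F t"
    using beta_pos by (simp add: pos_le_divide_eq mult.commute)
  thus ?thesis by (simp add: kappa_def)
qed

end

lemma double_count:
  fixes A :: "nat \<Rightarrow> 'b set" and U :: "'b set" and I :: "nat set"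
  assumes "finite U" "finite I" "\<forall>i\<in>I. A i \<subseteq> U"
  shows "(\<Sum>i\<in>I. card (A i)) = (\<Sum>X\<in>U. card {i\<in>I. X \<in> A i})"
proof -
  have "(\<Sum>i\<in>I. card (A i)) = (\<Sum>i\<in>I. \<Sum>X\<in>U. if X \<in> A i then 1 else 0)"
  proof (rule sum.cong[OF refl])
    fix i assume "i \<in> I"
    hence "{X\<in>U. X \<in> A i} = A i" using assms(3) by auto
    hence "card (A i) = (\<Sum>X\<in>{X\<in>U. X \<in> A i}. 1)" by simp
    also have "\<dots> = (\<Sum>X\<in>U. if X \<in> A i then 1 else 0)"
      by (rule sum.inter_filter[OF assms(1)])
    finally show "card (A i) = (\<Sum>X\<in>U. if X \<in> A i then 1 else 0)" .
  qed
  also have "\<dots> = (\<Sum>X\<in>U. \<Sum>i\<in>I. if X \<in> A i then 1 else 0)" by (rule sum.swap)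
  also have "\<dots> = (\<Sum>X\<in>U. card {i\<in>I. X \<in> A i})"
  proof (rule sum.cong[OF refl])
    fix X
    have "card {i\<in>I. X \<in> A i} = (\<Sum>i\<in>{i\<in>I. X \<in> A i}. 1)" by simp
    also have "\<dots> = (\<Sum>i\<in>I. if X \<in> A i then 1 else 0)"
      by (rule sum.inter_filter[OF assms(2)])
    finally show "(\<Sum>i\<in>I. if X \<in> A i then 1 else 0) = card {i\<in>I. X \<in> A i}" by simp
  qed
  finally show ?thesis .
qed

theorem theorem1p1:
  fixes \<F> :: "'a set set" and t k :: nat and \<A> :: "nat \<Rightarrow> 'a set set"
  assumes "t \<ge> 1" and "k \<ge> 1"
    and "finite \<F>" and "\<F> \<noteq> {}" and "\<forall>F\<in>\<F>. finite F"
    and "alpha \<F> \<ge> t"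
    and "\<forall>i\<in>{1..k}. \<A> i \<subseteq> \<F>"
    and "cross_t_intersecting t k \<A>"
    and "real k \<ge> kappa \<F> t"
  shows "(\<Sum>i=1..k. card (\<A> i)) \<le> k * lmax \<F> t
       \<and> (\<Prod>i=1..k. card (\<A> i)) \<le> (lmax \<F> t) ^ k
       \<and> (\<forall>\<L>. largest_t_intersecting \<F> t \<L> \<longrightarrow>
              (\<Sum>i=1..k. card \<L>) = k * lmax \<F> t \<and> (\<Prod>i=1..k. card \<L>) = (lmax \<F> t) ^ k)
       \<and> (\<exists>\<L>. largest_t_intersecting \<F> t \<L> \<and> cross_t_intersecting t k (\<lambda>_. \<L>))
       \<and> (real k > kappa \<F> t \<longrightarrow>
            ((\<Sum>i=1..k. card (\<A> i)) = k * lmax \<F> t \<longrightarrow>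
               (\<exists>\<L>. largest_t_intersecting \<F> t \<L> \<and> (\<forall>i\<in>{1..k}. \<A> i = \<L>)))
          \<and> ((\<Prod>i=1..k. card (\<A> i)) = (lmax \<F> t) ^ k \<longrightarrow>
               (\<exists>\<L>. largest_t_intersecting \<F> t \<L> \<and> (\<forall>i\<in>{1..k}. \<A> i = \<L>))))"
proof -
  note finF = assms(3) and neF = assms(4)
  define l where "l = lmax \<F> t"
  define U where "U = (\<Union>i\<in>{1..k}. \<A> i)"
  define c where "c X = card {i\<in>{1..k}. X \<in> \<A> i}" for X
  define S where "S = (\<Sum>i=1..k. card (\<A> i))"
  have UF: "U \<subseteq> \<F>" using assms(7) by (auto simp: U_def)
  have finU: "finite U" using UF finF by (rule finite_subset)
  have AU: "\<forall>i\<in>{1..k}. \<A> i \<subseteq> U" by (auto simp: U_def)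
  have Sc: "S = (\<Sum>X\<in>U. c X)" unfolding S_def c_def
    by (rule double_count[OF finU _ AU]) simp
  have ck: "c X \<le> k" for X
  proof -
    have "c X \<le> card {1..k}" unfolding c_def by (rule card_mono) auto
    thus ?thesis by simp
  qed
  have c1: "c X \<le> 1" if X: "X \<in> tminus t U" for X
  proof -
    from X obtain G where G: "G \<in> U" "G \<noteq> X" "card (X \<inter> G) < t"
      by (auto simp: tminus_def tplus_def not_le)
    from G(1) obtain j where j: "j \<in> {1..k}" "G \<in> \<A> j" by (auto simp: U_def)
    have "\<forall>a1\<in>{i\<in>{1..k}. X \<in> \<A> i}. \<forall>a2\<in>{i\<in>{1..k}. X \<in> \<A> i}. a1 = a2"
    proof (intro ballI, rule ccontr)
      fix i1 i2 assume i1: "i1 \<in> {i\<in>{1..k}. X \<in> \<A> i}" and i2: "i2 \<in> {i\<in>{1..k}. X \<in> \<A> i}"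
        and ne: "i1 \<noteq> i2"
      then obtain i where i: "i \<in> {i\<in>{1..k}. X \<in> \<A> i}" "i \<noteq> j" by blast
      hence "card (X \<inter> G) \<ge> t" using assms(8) j unfolding cross_t_intersecting_def by blast
      thus False using G(3) by simp
    qed
    hence "card {i\<in>{1..k}. X \<in> \<A> i} \<le> Suc 0" by (subst card_le_Suc0_iff_eq) auto
    thus ?thesis by (simp add: c_def)
  qed
  have Pl: "card (tplus t U) \<le> l" unfolding l_def by (rule tplus_le[OF finF neF UF])
  have tpU: "tplus t U \<subseteq> U" by (auto simp: tplus_def)
  have Udec: "U = tplus t U \<union> tminus t U" "tplus t U \<inter> tminus t U = {}"
    by (auto simp: tminus_def tplus_def)
  have finP: "finite (tplus t U)" "finite (tminus t U)"
    using finU by (auto simp: tminus_def tplus_def)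
  have Ssplit: "S = (\<Sum>X\<in>tplus t U. c X) + (\<Sum>X\<in>tminus t U. c X)"
    unfolding Sc by (subst Udec(1)) (rule sum.union_disjoint[OF finP Udec(2)])
  have s1: "(\<Sum>X\<in>tplus t U. c X) \<le> k * card (tplus t U)"
    using sum_mono[of "tplus t U" c "\<lambda>_. k"] ck by (simp add: mult.commute)
  have s2: "(\<Sum>X\<in>tminus t U. c X) \<le> card (tminus t U)"
    using sum_mono[of "tminus t U" c "\<lambda>_. 1"] c1 by simp
  have lpos: "l \<ge> 1" unfolding l_def by (rule lmax_pos[OF finF neF])
  have main: "S \<le> k * l \<and> (real k > kappa \<F> t \<longrightarrow> tminus t U \<noteq> {} \<longrightarrow> S < k * l)"
  proof (cases "tminus t U = {}")
    case True
    have "S \<le> k * card (tplus t U)" using Ssplit s1 True by simp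
    also have "\<dots> \<le> k * l" using Pl by simp
    finally show ?thesis using True by simp
  next
    case False
    have M: "real (card (tminus t U)) \<le> kappa \<F> t * (real l - real (card (tplus t U)))"
      unfolding l_def by (rule tminus_bound[OF finF neF UF False])
    have lt: "card (tplus t U) < l" unfolding l_def by (rule tplus_less[OF finF neF UF False])
    hence d: "real l - real (card (tplus t U)) > 0" by simp
    have "kappa \<F> t * (real l - real (card (tplus t U))) \<le> real k * (real l - real (card (tplus t U)))"
      using assms(9) d by (intro mult_right_mono) auto
    hence M2: "real (card (tminus t U)) \<le> real k * (real l - real (card (tplus t U)))" using M by linarith
    have SS: "real S \<le> real k * real (card (tplus t U)) + real (card (tminus t U))"
      using Ssplit s1 s2 by (simp flip: of_nat_mult of_nat_add)
    have "real S \<le> real k * real l" using SS M2 by (simp add: algebra_simps)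
    hence A1: "S \<le> k * l" by (simp flip: of_nat_mult)
    have "real k > kappa \<F> t \<Longrightarrow> S < k * l"
    proof -
      assume kk: "real k > kappa \<F> t"
      have "kappa \<F> t * (real l - real (card (tplus t U))) < real k * (real l - real (card (tplus t U)))"
        using kk d by (intro mult_strict_right_mono) auto
      hence "real S < real k * real l" using SS M by (simp add: algebra_simps)
      thus "S < k * l" by (simp flip: of_nat_mult)
    qed
    thus ?thesis using A1 by blast
  qed
  have eqcase: "\<exists>L. largest_t_intersecting \<F> t L \<and> (\<forall>i\<in>{1..k}. \<A> i = L)"
    if Seq: "S = k * l" and kk: "real k > kappa \<F> t"
  proof -
    have T: "tminus t U = {}" using main Seq kk by auto
    have Ueq: "tplus t U = U" using T tpU by (auto simp: tminus_def)
    have cU: "card U \<le> l" using Pl Ueq by simp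
    have "S \<le> k * card U" using Ssplit s1 T Ueq by simp
    with Seq cU have cardU: "card U = l" and "S = k * card U"
      using assms(2) by (auto intro: le_antisym)
    hence sumeq: "(\<Sum>X\<in>U. c X) = (\<Sum>X\<in>U. k)" using Sc by simp
    have allk: "c X = k" if "X \<in> U" for X
    proof (rule ccontr)
      assume "c X \<noteq> k"
      hence "c X < k" using ck[of X] by simp
      hence "(\<Sum>X\<in>U. c X) < (\<Sum>X\<in>U. k)"
        using that ck finU by (intro sum_strict_mono_ex1) auto
      thus False using sumeq by simp
    qed
    have inall: "X \<in> \<A> i" if "X \<in> U" "i \<in> {1..k}" for X i
    proof -
      have "{i\<in>{1..k}. X \<in> \<A> i} = {1..k}"
        using allk[OF that(1)] by (intro card_subset_eq) (auto simp: c_def)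
      thus ?thesis using that(2) by blast
    qed
    have AeqU: "\<forall>i\<in>{1..k}. \<A> i = U" using AU inall by blast
    have "t_intersecting t U" using tplus_int[of t U] Ueq by simp
    hence "largest_t_intersecting \<F> t U" using UF cardU by (simp add: largest_t_intersecting_def l_def)
    thus ?thesis using AeqU by blast
  qed
  have amgm: "real (\<Prod>i=1..k. card (\<A> i)) \<le> (real S / k) ^ k"
    unfolding S_def by (rule amgm_nat[OF assms(2)])
  have kpos: "real k > 0" using assms(2) by simp
  have "S \<le> k * l" using main by simp
  hence "real S \<le> real k * real l" by (metis of_nat_le_iff of_nat_mult)
  hence Sk: "real S / k \<le> real l" using kpos by (simp add: divide_le_eq mult.commute)
  have "(real S / k) ^ k \<le> real l ^ k" by (rule power_mono[OF Sk]) simp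
  hence prodle: "(\<Prod>i=1..k. card (\<A> i)) \<le> l ^ k" using amgm
    by (simp flip: of_nat_power del: of_nat_prod)
  have prodeq: "S = k * l" if "(\<Prod>i=1..k. card (\<A> i)) = l ^ k"
  proof (rule ccontr)
    assume "S \<noteq> k * l"
    hence "S < k * l" using main by simp
    hence "real S < real k * real l" by (simp flip: of_nat_mult)
    hence "real S / k < real l" using kpos by (simp add: divide_less_eq mult.commute)
    hence "(real S / k) ^ k < real l ^ k"
      using assms(2) by (intro power_strict_mono) auto
    hence "real (\<Prod>i=1..k. card (\<A> i)) < real l ^ k" using amgm by linarith
    thus False using that by (metis of_nat_power less_irrefl)
  qed
  obtain L0 where L0: "largest_t_intersecting \<F> t L0" using ex_largest[OF finF neF] by blast
  have exL: "\<exists>L. largest_t_intersecting \<F> t L \<and> cross_t_intersecting t k (\<lambda>_. L)"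
  proof (cases "card L0 \<ge> 2")
    case True
    have "card (A \<inter> B) \<ge> t" if AL: "A \<in> L0" "B \<in> L0" for A B
    proof (cases "A = B")
      case False thus ?thesis using that L0 by (auto simp: largest_t_intersecting_def t_intersecting_def)
    next
      case eq: True
      have "L0 \<noteq> {A}" using True by auto
      then obtain C where C: "C \<in> L0" "C \<noteq> A" using AL(1) by blast
      hence "card (A \<inter> C) \<ge> t" using AL L0 by (auto simp: largest_t_intersecting_def t_intersecting_def)
      moreover have "finite A" using AL(1) L0 assms(5) by (auto simp: largest_t_intersecting_def)
      hence "card (A \<inter> C) \<le> card A" by (intro card_mono) auto
      ultimately show ?thesis using eq by simp
    qed
    thus ?thesis using L0 by (auto simp: cross_t_intersecting_def)
  next
    case False
    have cL0: "card L0 = l" using L0 by (simp add: largest_t_intersecting_def l_def)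
    hence l1: "l = 1" using False lpos by simp
    obtain F0 where F0: "F0 \<in> \<F>" "card F0 = alpha \<F>"
    proof -
      have "alpha \<F> \<in> card ` \<F>" unfolding alpha_def by (rule Max_in) (use finF neF in auto)
      thus ?thesis using that by (metis imageE)
    qed
    have "largest_t_intersecting \<F> t {F0}"
      using F0 l1 by (simp add: largest_t_intersecting_def t_intersecting_def l_def)
    moreover have "cross_t_intersecting t k (\<lambda>_. {F0})"
      using F0 assms(6) by (simp add: cross_t_intersecting_def)
    ultimately show ?thesis by blast
  qed
  have third: "\<forall>\<L>. largest_t_intersecting \<F> t \<L> \<longrightarrow>
              (\<Sum>i=1..k. card \<L>) = k * lmax \<F> t \<and> (\<Prod>i=1..k. card \<L>) = (lmax \<F> t) ^ k"
    by (simp add: largest_t_intersecting_def)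
  have e1: "S = k * l \<longrightarrow> (\<exists>L. largest_t_intersecting \<F> t L \<and> (\<forall>i\<in>{1..k}. \<A> i = L))"
    if "real k > kappa \<F> t" using eqcase[OF _ that] by blast
  have e2: "(\<Prod>i=1..k. card (\<A> i)) = l ^ k \<longrightarrow> (\<exists>L. largest_t_intersecting \<F> t L \<and> (\<forall>i\<in>{1..k}. \<A> i = L))"
    if "real k > kappa \<F> t" using eqcase[OF prodeq that] by blast
  have m1: "S \<le> k * l" using main by simp
  show ?thesis
    unfolding S_def[symmetric] l_def[symmetric]
    using m1 prodle third exL e1 e2 unfolding l_def by (intro conjI impI) simp_all
qed

end
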